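(* Let $X_1,X_2,\dots$ be independent integer-valued random variables with common distribution function $F(x)=P(X_1\le x)$, where $F$ is not concentrated on a half-axis, and let $S_0=0$, $S_n=X_1+\cdots+X_n$. Suppose $\mathbb E[X_1]<0$ and that for some $0<\xi<1$ and $0<r<1$, \[ P(X_1\le x)=\xi\, r^{-x},\qquad x=0,-1,-2,\dots. \] Define $p=P(\sup_n S_n>0)$, the measure $L$ on Borel subsets $A\subset(0,\infty)$ by \[ L(A)=\sum_{n=1}^\infty P\Big(\max_{0\le k<n}S_k=0<S_n\in A\Big), \] and \[ \zeta=\sum_{n=1}^\infty P\Big(\max_{1\le k<n}S_k<0,\ S_n=0\Big) \] (the probability that the first weak ladder height, i.e. the value $S_n$ at the first $n\ge1$ with $S_n\ge0$, exists and equals $0$). Then \[ (1-\zeta)\,p=r+(1-r)\,\mathbb E[X_1], \] and for $x=1,2,\dots$, \[ (1-\zeta)\,L(0,x]=F(x)-F(0)+(1-r)\sum_{m=1}^{x}\big(1-F(m)\big). \]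
   Context: For $n=1$ the condition $\max_{1\le k<n}S_k<0$ is vacuous. *)

theory Defs
  imports "HOL-Probability.Probability"
begin

text \<open>Random walk: X 0, X 1, ... play the role of X_1, X_2, ...;
  walk X n w = S_n = X_1 + ... + X_n, so walk X 0 w = S_0 = 0.\<close>
definition walk :: "(nat \<Rightarrow> 'a \<Rightarrow> int) \<Rightarrow> nat \<Rightarrow> 'a \<Rightarrow> int" where
  "walk X n w = (\<Sum>i<n. X i w)"

definition ladder_L :: "'a measure \<Rightarrow> (nat \<Rightarrow> 'a \<Rightarrow> int) \<Rightarrow> int set \<Rightarrow> real" where
  "ladder_L M X A = (\<Sum>n. measure M {w \<in> space M.
      Max ((\<lambda>k. walk X k w) ` {..<Suc n}) = 0 \<and> 0 < walk X (Suc n) w \<and> walk X (Suc n) w \<in> A})"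

definition ladder_zeta :: "'a measure \<Rightarrow> (nat \<Rightarrow> 'a \<Rightarrow> int) \<Rightarrow> real" where
  "ladder_zeta M X = (\<Sum>n. measure M {w \<in> space M.
      (\<forall>k\<in>{1..<Suc n}. walk X k w < 0) \<and> walk X (Suc n) w = 0})"

end

theory Submission
  imports Defs
begin

definition loc :: "nat \<Rightarrow> ((nat \<Rightarrow> int) \<Rightarrow> bool) \<Rightarrow> bool" where
  "loc n Q \<longleftrightarrow> (\<forall>f g. (\<forall>i<n. f i = g i) \<longrightarrow> Q f = Q g)"

definition ext :: "int list \<Rightarrow> nat \<Rightarrow> int" where
  "ext zs i = (if i < length zs then zs ! i else 0)"

lemma map_upt_eq: "map f [0..<n] = xs \<longleftrightarrow> length xs = n \<and> (\<forall>i<n. f i = xs ! i)"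
  by (auto simp: list_eq_iff_nth_eq)

lemma arith_helper:
  fixes N :: nat and \<mu> EW t SV SW y :: real
  assumes "real N * \<mu> / 8 \<le> y" "SV < - real N * \<mu> / 4" "EW \<le> \<mu> / 2" "\<mu> < 0" "0 < N" "t = - \<mu> / 8"
   "y - SV \<le> SW"
  shows "real N * (EW + t) \<le> SW"
proof -
  have b: "real N * EW \<le> real N * (\<mu> / 2)" by (rule mult_left_mono[OF assms(3)]) simp
  have a: "real N * (EW + t) = real N * EW - real N * \<mu> / 8" using assms(6) by (simp add: algebra_simps)
  have c: "- real N * \<mu> / 4 = - (real N * \<mu>) / 4" "real N * (\<mu> / 2) = real N * \<mu> / 2" by simp_all
  show ?thesis using a b c assms(1,2,7) by linarith
qed

locale rw = prob_space M for M :: "'a measure" +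
  fixes X :: "nat \<Rightarrow> 'a \<Rightarrow> int"
  assumes indep: "indep_vars (\<lambda>_. count_space UNIV) X UNIV"
    and ident: "\<And>i. distr M (count_space UNIV) (X i) = distr M (count_space UNIV) (X 0)"
begin

lemma X_meas[measurable]: "X i \<in> measurable M (count_space UNIV)"
  using indep unfolding indep_vars_def by auto

definition Z :: "nat \<Rightarrow> 'a \<Rightarrow> int list" where
  "Z n w = map (\<lambda>i. X i w) [0..<n]"

lemma fin_ev: "{w\<in>space M. \<forall>i<n. X i w = c i} \<in> sets M"
proof (induction n)
  case 0 then show ?case by simp
next
  case (Suc n)
  have "{w\<in>space M. \<forall>i<Suc n. X i w = c i} = {w\<in>space M. \<forall>i<n. X i w = c i} \<inter> {w\<in>space M. X n w = c n}"
    by (auto simp: less_Suc_eq)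
  also have "\<dots> \<in> sets M" using Suc by (intro sets.Int) measurable
  finally show ?case .
qed

lemma Z_meas[measurable]: "Z n \<in> measurable M (count_space UNIV)"
proof -
  have "Z n -` {xs} \<inter> space M \<in> sets M" for xs :: "int list"
  proof -
    have "Z n -` {xs} \<inter> space M = (if length xs = n then {w\<in>space M. \<forall>i<n. X i w = xs ! i} else {})"
      unfolding Z_def by (intro set_eqI) (auto simp add: map_upt_eq)
    also have "\<dots> \<in> sets M" using fin_ev by simp
    finally show ?thesis .
  qed
  then show ?thesis by (subst measurable_count_space_eq_countable) simp_all
qed

lemma ext_Z: "i < n \<Longrightarrow> ext (Z n w) i = X i w"
  by (simp add: ext_def Z_def)

lemma loc_Z: "loc n Q \<Longrightarrow> Q (\<lambda>i. X i w) = Q (ext (Z n w))"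
  unfolding loc_def by (erule allE, erule allE, erule mp) (simp add: ext_Z)

lemma ev_meas: "loc n Q \<Longrightarrow> {w\<in>space M. Q (\<lambda>i. X i w)} \<in> sets M"
proof -
  assume "loc n Q"
  then have "{w\<in>space M. Q (\<lambda>i. X i w)} = (\<lambda>w. Z n w) -` {zs. Q (ext zs)} \<inter> space M"
    using loc_Z by auto
  also have "\<dots> \<in> sets M" by (rule measurable_sets[OF Z_meas]) simp
  finally show ?thesis .
qed

lemma indep_XZ: "indep_var (count_space UNIV) (\<lambda>w. [X n w]) (count_space UNIV) (Z n)"
proof -
  have 1: "indep_var (PiM {n} (\<lambda>_. count_space UNIV)) (\<lambda>\<omega>. restrict (\<lambda>i. X i \<omega>) {n})
     (PiM {..<n} (\<lambda>_. count_space UNIV)) (\<lambda>\<omega>. restrict (\<lambda>i. X i \<omega>) {..<n})"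
    by (rule indep_var_restrict[OF indep]) auto
  have m1: "(\<lambda>f. [f n]) \<in> measurable (PiM {n} (\<lambda>_. count_space UNIV)) (count_space (UNIV :: int list set))"
    by (rule measurable_compose[OF measurable_component_singleton]) auto
  have m2: "(\<lambda>f. map f [0..<n]) \<in> measurable (PiM {..<n} (\<lambda>_. count_space UNIV)) (count_space (UNIV :: int list set))"
  proof -
    have "(\<lambda>f. map f [0..<n]) -` {xs} \<inter> space (PiM {..<n} (\<lambda>_. count_space UNIV)) \<in> sets (PiM {..<n} (\<lambda>_. count_space UNIV))" for xs :: "int list"
    proof -
      have "(\<lambda>f. map f [0..<n]) -` {xs} \<inter> space (PiM {..<n} (\<lambda>_. count_space UNIV)) =
        (if length xs = n then (\<Pi>\<^sub>E i\<in>{..<n}. {xs ! i}) else {})"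
      proof (cases "length xs = n")
        case True
        show ?thesis
        proof (intro set_eqI iffI)
          fix f assume "f \<in> (\<lambda>f. map f [0..<n]) -` {xs} \<inter> space (PiM {..<n} (\<lambda>_. count_space UNIV))"
          then show "f \<in> (if length xs = n then (\<Pi>\<^sub>E i\<in>{..<n}. {xs ! i}) else {})"
            using True by (simp only: space_PiM map_upt_eq vimage_def Int_iff mem_Collect_eq) (auto simp: PiE_def map_upt_eq)
        next
          fix f assume "f \<in> (if length xs = n then (\<Pi>\<^sub>E i\<in>{..<n}. {xs ! i}) else {})"
          then show "f \<in> (\<lambda>f. map f [0..<n]) -` {xs} \<inter> space (PiM {..<n} (\<lambda>_. count_space UNIV))"
            using True by (simp only: space_PiM map_upt_eq vimage_def Int_iff mem_Collect_eq if_True) (auto simp: PiE_def map_upt_eq)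
        qed
      qed (simp only: map_upt_eq vimage_def, auto)
      also have "\<dots> \<in> sets (PiM {..<n} (\<lambda>_. count_space UNIV))"
        by (auto intro!: sets_PiM_I_finite)
      finally show ?thesis .
    qed
    then show ?thesis by (subst measurable_count_space_eq_countable) simp_all
  qed
  have "indep_var (count_space UNIV) ((\<lambda>f. [f n]) \<circ> (\<lambda>\<omega>. restrict (\<lambda>i. X i \<omega>) {n}))
     (count_space UNIV) ((\<lambda>f. map f [0..<n]) \<circ> (\<lambda>\<omega>. restrict (\<lambda>i. X i \<omega>) {..<n}))"
    by (rule indep_var_compose[OF 1 m1 m2])
  moreover have "((\<lambda>f. [f n]) \<circ> (\<lambda>\<omega>. restrict (\<lambda>i. X i \<omega>) {n})) = (\<lambda>w. [X n w])" by auto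
  moreover have "((\<lambda>f. map f [0..<n]) \<circ> (\<lambda>\<omega>. restrict (\<lambda>i. X i \<omega>) {..<n})) = Z n"
    by (simp add: Z_def fun_eq_iff)
  ultimately show ?thesis by simp
qed

lemma KL:
  assumes lq: "\<And>x. loc n (\<lambda>f. Q f x)"
  shows "prob {w\<in>space M. Q (\<lambda>i. X i w) (X n w)} = (\<integral>w'. prob {w\<in>space M. Q (\<lambda>i. X i w) (X 0 w')} \<partial>M)"
proof -
  define D1 where "D1 = distr M (count_space UNIV) (\<lambda>w. [X n w])"
  define D2 where "D2 = distr M (count_space UNIV) (Z n)"
  define R where "R = {(a, zs). Q (ext zs) (hd a)}"
  define g where "g x = prob {w\<in>space M. Q (\<lambda>i. X i w) x}" for x
  have m1[measurable]: "(\<lambda>w. [X n w]) \<in> measurable M (count_space (UNIV :: int list set))"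
    by (rule measurable_compose[OF X_meas]) simp
  interpret D2: prob_space D2 unfolding D2_def by (rule prob_space_distr) simp
  have cc: "count_space (UNIV :: int list set) \<Otimes>\<^sub>M count_space (UNIV :: int list set) = count_space UNIV"
    using pair_measure_countable[of "UNIV :: int list set" "UNIV :: int list set"] by simp
  have pm: "(\<lambda>w. ([X n w], Z n w)) \<in> measurable M (count_space UNIV \<Otimes>\<^sub>M count_space UNIV)"
    by (rule measurable_Pair) (simp_all add: m1)
  have ev: "{w\<in>space M. Q (\<lambda>i. X i w) (X n w)} = (\<lambda>w. ([X n w], Z n w)) -` R \<inter> space M"
    using loc_Z[OF lq] by (auto simp: R_def)
  have "emeasure M {w\<in>space M. Q (\<lambda>i. X i w) (X n w)} = emeasure (distr M (count_space UNIV \<Otimes>\<^sub>M count_space UNIV) (\<lambda>w. ([X n w], Z n w))) R"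
    unfolding ev by (rule emeasure_distr[symmetric, OF pm]) (simp only: cc sets_count_space, simp)
  also have "distr M (count_space UNIV \<Otimes>\<^sub>M count_space UNIV) (\<lambda>w. ([X n w], Z n w)) = D1 \<Otimes>\<^sub>M D2"
    using indep_XZ[of n] unfolding indep_var_distribution_eq D1_def D2_def by simp
  also have "emeasure (D1 \<Otimes>\<^sub>M D2) R = (\<integral>\<^sup>+a. emeasure D2 (Pair a -` R) \<partial>D1)"
  proof (rule D2.emeasure_pair_measure_alt)
    have "sets (D1 \<Otimes>\<^sub>M D2) = sets (count_space (UNIV :: int list set) \<Otimes>\<^sub>M count_space (UNIV :: int list set))"
      by (rule sets_pair_measure_cong) (simp_all add: D1_def D2_def)
    also have "\<dots> = UNIV" by (simp only: cc sets_count_space Pow_UNIV)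
    finally show "R \<in> sets (D1 \<Otimes>\<^sub>M D2)" by simp
  qed
  also have "\<dots> = (\<integral>\<^sup>+a. ennreal (g (hd a)) \<partial>D1)"
  proof (rule nn_integral_cong)
    fix a
    have "emeasure D2 (Pair a -` R) = emeasure M (Z n -` (Pair a -` R) \<inter> space M)"
      unfolding D2_def by (rule emeasure_distr[OF Z_meas]) simp
    also have "Z n -` (Pair a -` R) \<inter> space M = {w\<in>space M. Q (\<lambda>i. X i w) (hd a)}"
      using loc_Z[OF lq] by (auto simp: R_def)
    finally show "emeasure D2 (Pair a -` R) = ennreal (g (hd a))"
      by (simp add: g_def emeasure_eq_measure)
  qed
  also have "\<dots> = (\<integral>\<^sup>+w. ennreal (g (X n w)) \<partial>M)"
    unfolding D1_def by (rule trans[OF nn_integral_distr[OF m1]]) simp_all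
  also have "\<dots> = (\<integral>\<^sup>+x. ennreal (g x) \<partial>distr M (count_space UNIV) (X n))"
    by (rule nn_integral_distr[OF X_meas, symmetric]) simp
  also have "\<dots> = (\<integral>\<^sup>+x. ennreal (g x) \<partial>distr M (count_space UNIV) (X 0))"
    unfolding ident[of n] ..
  also have "\<dots> = (\<integral>\<^sup>+w. ennreal (g (X 0 w)) \<partial>M)"
    by (rule nn_integral_distr[OF X_meas]) simp
  also have "\<dots> = ennreal (\<integral>w. g (X 0 w) \<partial>M)"
  proof (rule nn_integral_eq_integral)
    show "integrable M (\<lambda>w. g (X 0 w))"
      by (rule integrable_const_bound[where B=1]) (auto simp: g_def intro!: measurable_compose[OF X_meas])
  qed (auto simp add: g_def)
  finally have "ennreal (prob {w\<in>space M. Q (\<lambda>i. X i w) (X n w)}) = ennreal (\<integral>w. g (X 0 w) \<partial>M)"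
    by (simp add: emeasure_eq_measure)
  then show ?thesis
    by (subst (asm) ennreal_inj) (auto simp: g_def intro!: integral_nonneg_AE)
qed

definition cv :: "(int \<Rightarrow> real) \<Rightarrow> int \<Rightarrow> real" where
  "cv f y = (\<integral>w. f (y - X 0 w) \<partial>M)"

definition bnd :: "(int \<Rightarrow> real) \<Rightarrow> bool" where
  "bnd f \<longleftrightarrow> (\<exists>C. \<forall>y. \<bar>f y\<bar> \<le> C)"

lemma cv_meas: "(\<lambda>w. f (y - X 0 w)) \<in> borel_measurable M"
proof -
  have "(\<lambda>w. y - X 0 w) \<in> measurable M (count_space UNIV)"
    by (rule measurable_compose[OF X_meas]) simp
  then show ?thesis by (rule measurable_compose) simp
qed

lemma cv_int: "bnd f \<Longrightarrow> integrable M (\<lambda>w. f (y - X 0 w))"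
  unfolding bnd_def by (elim exE, rule integrable_const_bound) (auto intro: cv_meas)

lemma cv_mono: "bnd f \<Longrightarrow> bnd g \<Longrightarrow> (\<And>z. f z \<le> g z) \<Longrightarrow> cv f y \<le> cv g y"
  unfolding cv_def by (rule integral_mono) (auto intro: cv_int)

lemma cv_nonneg: "(\<And>z. 0 \<le> f z) \<Longrightarrow> 0 \<le> cv f y"
  unfolding cv_def by (rule integral_nonneg_AE) auto

lemma cv_diff: "bnd f \<Longrightarrow> bnd g \<Longrightarrow> cv (\<lambda>z. f z - g z) y = cv f y - cv g y"
  unfolding cv_def by (rule Bochner_Integration.integral_diff[OF cv_int cv_int])

lemma cv_cmult: "cv (\<lambda>z. c * f z) y = c * cv f y"
  unfolding cv_def by simp

lemma cv_sum: "(\<And>i. i \<in> I \<Longrightarrow> bnd (f i)) \<Longrightarrow> cv (\<lambda>z. \<Sum>i\<in>I. f i z) y = (\<Sum>i\<in>I. cv (f i) y)"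
  unfolding cv_def by (rule Bochner_Integration.integral_sum[where I=I and f="\<lambda>i w. f i (y - X 0 w)"]) (auto intro: cv_int)

lemma bnd_prob: "bnd (\<lambda>y. prob (E y))"
proof -
  have "\<forall>y. \<bar>prob (E y)\<bar> \<le> 1" by simp
  then show ?thesis unfolding bnd_def by blast
qed

lemma bnd_sum: "finite I \<Longrightarrow> (\<And>i. i \<in> I \<Longrightarrow> bnd (f i)) \<Longrightarrow> bnd (\<lambda>z. \<Sum>i\<in>I. f i z)"
proof (induction I rule: finite_induct)
  case empty then show ?case unfolding bnd_def by (intro exI[of _ 0]) simp
next
  case (insert x F)
  obtain C1 where "\<forall>y. \<bar>f x y\<bar> \<le> C1" using insert.prems[of x] unfolding bnd_def by auto
  moreover obtain C2 where "\<forall>y. \<bar>(\<Sum>i\<in>F. f i y)\<bar> \<le> C2"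
    using insert.IH insert.prems unfolding bnd_def by auto
  ultimately have "\<forall>y. \<bar>(\<Sum>i\<in>insert x F. f i y)\<bar> \<le> C1 + C2"
    using insert by (auto intro: abs_triangle_ineq[THEN order_trans] add_mono)
  then show ?case unfolding bnd_def by blast
qed

definition ws :: "(nat \<Rightarrow> int) \<Rightarrow> nat \<Rightarrow> int" where
  "ws f k = (\<Sum>i<k. f i)"

lemma walk_ws: "walk X k w = ws (\<lambda>i. X i w) k"
  by (simp add: walk_def ws_def)

lemma ws_loc: "k \<le> n \<Longrightarrow> (\<forall>i<n. f i = g i) \<Longrightarrow> ws f k = ws g k"
  unfolding ws_def by (rule sum.cong) auto

lemma ws_Suc: "ws f (Suc n) = ws f n + f n"
  by (simp add: ws_def)

lemma walk_Suc: "walk X (Suc n) w = walk X n w + X n w"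
  by (simp add: walk_def)

lemma walk_0: "walk X 0 w = 0"
  by (simp add: walk_def)

definition A :: "int set \<Rightarrow> nat \<Rightarrow> int \<Rightarrow> real" where
  "A B n y = prob {w\<in>space M. (\<forall>k\<in>{1..n}. walk X k w \<in> B) \<and> walk X n w = y}"

definition c :: "nat \<Rightarrow> int \<Rightarrow> real" where
  "c n y = prob {w\<in>space M. y \<le> walk X n w}"

lemma step:
  "prob {w\<in>space M. (\<forall>k\<in>{1..n}. walk X k w \<in> B) \<and> walk X (Suc n) w = h} = cv (A B n) h"
proof -
  define Q where "Q f x = ((\<forall>k\<in>{1..n}. ws f k \<in> B) \<and> ws f n + x = h)" for f x
  have lq: "loc n (\<lambda>f. Q f x)" for x
    unfolding loc_def Q_def
  proof (intro allI impI)
    fix f g :: "nat \<Rightarrow> int" assume "\<forall>i<n. f i = g i"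
    then have "\<And>k. k \<le> n \<Longrightarrow> ws f k = ws g k" using ws_loc by blast
    then show "((\<forall>k\<in>{1..n}. ws f k \<in> B) \<and> ws f n + x = h) = ((\<forall>k\<in>{1..n}. ws g k \<in> B) \<and> ws g n + x = h)"
      by auto
  qed
  have "{w\<in>space M. (\<forall>k\<in>{1..n}. walk X k w \<in> B) \<and> walk X (Suc n) w = h} = {w\<in>space M. Q (\<lambda>i. X i w) (X n w)}"
    by (simp add: Q_def walk_ws ws_Suc)
  also have "prob \<dots> = (\<integral>w'. prob {w\<in>space M. Q (\<lambda>i. X i w) (X 0 w')} \<partial>M)"
    by (rule KL[OF lq])
  also have "\<dots> = cv (A B n) h"
    unfolding cv_def A_def
    by (rule Bochner_Integration.integral_cong) (auto simp: Q_def walk_ws intro!: arg_cong[where f=prob])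
  finally show ?thesis .
qed

lemma c_Suc: "c (Suc n) y = cv (c n) y"
proof -
  define Q where "Q f x = (y \<le> ws f n + x)" for f x
  have lq: "loc n (\<lambda>f. Q f x)" for x
    unfolding loc_def Q_def
  proof (intro allI impI)
    fix f g :: "nat \<Rightarrow> int" assume "\<forall>i<n. f i = g i"
    then have "ws f n = ws g n" using ws_loc by blast
    then show "(y \<le> ws f n + x) = (y \<le> ws g n + x)" by simp
  qed
  have "c (Suc n) y = prob {w\<in>space M. Q (\<lambda>i. X i w) (X n w)}"
    by (simp add: c_def Q_def walk_ws ws_Suc)
  also have "\<dots> = (\<integral>w'. prob {w\<in>space M. Q (\<lambda>i. X i w) (X 0 w')} \<partial>M)"
    by (rule KL[OF lq])
  also have "\<dots> = cv (c n) y"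
    unfolding cv_def c_def
    by (rule Bochner_Integration.integral_cong) (auto simp: Q_def walk_ws intro!: arg_cong[where f=prob])
  finally show ?thesis .
qed

lemma c_0: "c 0 y = (if y \<le> 0 then 1 else 0)"
  by (simp add: c_def walk_0 prob_space)

lemma A_0: "A B 0 y = (if y = 0 then 1 else 0)"
  by (simp add: A_def walk_0 prob_space)

lemma A_Suc: "A B (Suc n) y = (if y \<in> B then cv (A B n) y else 0)"
proof -
  have "{w\<in>space M. (\<forall>k\<in>{1..Suc n}. walk X k w \<in> B) \<and> walk X (Suc n) w = y} =
     (if y \<in> B then {w\<in>space M. (\<forall>k\<in>{1..n}. walk X k w \<in> B) \<and> walk X (Suc n) w = y} else {})"
    by (auto simp: atLeastAtMostSuc_conv)
  then show ?thesis using step[of n B y] by (simp add: A_def)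
qed

lemma A_bnd: "bnd (A B n)"
  unfolding A_def by (rule bnd_prob)

lemma c_bnd: "bnd (c n)"
  unfolding c_def by (rule bnd_prob)

lemma A_nonneg: "0 \<le> A B n y"
  by (simp add: A_def)

lemma c_le1: "c n y \<le> 1"
  by (simp add: c_def)

lemma c_nonneg: "0 \<le> c n y"
  by (simp add: c_def)

lemma generic:
  assumes Bsub: "B \<subseteq> {..0}"
    and wnn: "\<And>y. 0 \<le> w y" and wK: "\<And>y. w y \<le> K"
    and weq: "\<And>y. w y = (if y = 0 then 1 else 0) + (if y \<in> B then cv w y else 0)"
    and cto: "\<And>y. (\<lambda>N. c N y) \<longlonglongrightarrow> 0"
  shows "(\<lambda>n. A B n y) sums w y"
    and "(\<lambda>n. prob {w\<in>space M. (\<forall>k\<in>{1..n}. walk X k w \<in> B) \<and> walk X (Suc n) w = h}) sums cv w h"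
proof -
  have K0: "0 \<le> K" using wnn[of 0] wK[of 0] by simp
  have wb: "bnd w" unfolding bnd_def using wnn wK by (intro exI[of _ K]) (auto simp: abs_of_nonneg)
  define S where "S N y = (\<Sum>n<Suc N. A B n y)" for N y
  define e where "e N y = w y - S N y" for N y
  have Sb: "bnd (S N)" for N unfolding S_def by (rule bnd_sum) (auto intro: A_bnd)
  have cvS: "cv (S N) y = (\<Sum>n<Suc N. cv (A B n) y)" for N y
    unfolding S_def by (rule cv_sum) (rule A_bnd)
  have S_Suc: "S (Suc N) y = (if y = 0 then 1 else 0) + (if y \<in> B then cv (S N) y else 0)" for N y
  proof -
    have "S (Suc N) y = A B 0 y + (\<Sum>n<Suc N. A B (Suc n) y)"
      unfolding S_def by (rule sum.lessThan_Suc_shift)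
    also have "\<dots> = (if y = 0 then 1 else 0) + (if y \<in> B then (\<Sum>n<Suc N. cv (A B n) y) else 0)"
      by (simp add: A_0 A_Suc)
    finally show ?thesis by (simp add: cvS)
  qed
  have e_0: "e 0 y = (if y \<in> B then cv w y else 0)" for y
    unfolding e_def S_def using weq[of y] by (simp add: A_0)
  have e_Suc: "e (Suc N) y = (if y \<in> B then cv (e N) y else 0)" for N y
  proof -
    have "e (Suc N) y = (if y \<in> B then cv w y - cv (S N) y else 0)"
      unfolding e_def using weq[of y] S_Suc[of N y] by simp
    also have "\<dots> = (if y \<in> B then cv (e N) y else 0)"
      unfolding e_def using cv_diff[OF wb Sb, of N y] by simp
    finally show ?thesis .
  qed
  have eb: "\<forall>y. 0 \<le> e N y \<and> e N y \<le> K * c N y" for N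
  proof (induction N)
    case 0
    show ?case
    proof
      fix y
      show "0 \<le> e 0 y \<and> e 0 y \<le> K * c 0 y"
      proof (cases "y \<in> B")
        case True
        then have "y \<le> 0" using Bsub by auto
        have "e 0 y \<le> w y" unfolding e_def S_def by (simp add: A_0)
        then show ?thesis using True \<open>y \<le> 0\<close> e_0[of y] cv_nonneg[of w y, OF wnn] wK[of y]
          by (simp add: c_0)
      next
        case False
        then show ?thesis using e_0[of y] K0 c_nonneg[of 0 y] by simp
      qed
    qed
  next
    case (Suc N)
    have ebn: "bnd (e N)" unfolding bnd_def
    proof (intro exI[of _ K] allI)
      fix y
      have "K * c N y \<le> K" using K0 c_le1[of N y] by (simp add: mult_left_le)
      then show "\<bar>e N y\<bar> \<le> K" using spec[OF Suc.IH, of y] by auto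
    qed
    have kcb: "bnd (\<lambda>z. K * c N z)"
      unfolding bnd_def using K0 c_nonneg c_le1
      by (intro exI[of _ K] allI) (simp add: abs_mult mult_left_le)
    show ?case
    proof
      fix y
      have "0 \<le> cv (e N) y" by (rule cv_nonneg) (use Suc.IH in auto)
      moreover have "cv (e N) y \<le> cv (\<lambda>z. K * c N z) y"
        by (rule cv_mono[OF ebn kcb]) (use Suc.IH in auto)
      moreover have "cv (\<lambda>z. K * c N z) y = K * c (Suc N) y"
        by (simp add: cv_cmult c_Suc)
      ultimately show "0 \<le> e (Suc N) y \<and> e (Suc N) y \<le> K * c (Suc N) y"
        using e_Suc[of N y] K0 c_nonneg[of "Suc N" y] by auto
    qed
  qed
  have eto: "(\<lambda>N. e N y) \<longlonglongrightarrow> 0" for y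
  proof (rule tendsto_sandwich[of "\<lambda>_. 0" _ _ "\<lambda>N. K * c N y"])
    show "\<forall>\<^sub>F N in sequentially. 0 \<le> e N y" using eb by auto
    show "\<forall>\<^sub>F N in sequentially. e N y \<le> K * c N y" using eb by auto
    show "(\<lambda>N. K * c N y) \<longlonglongrightarrow> 0" using tendsto_mult_right_zero[OF cto] .
  qed simp
  show "(\<lambda>n. A B n y) sums w y"
  proof -
    have "(\<lambda>N. w y - e N y) \<longlonglongrightarrow> w y - 0" by (intro tendsto_intros eto)
    then have "(\<lambda>N. \<Sum>n<Suc N. A B n y) \<longlonglongrightarrow> w y" by (simp add: e_def S_def)
    then show ?thesis unfolding sums_def by (rule LIMSEQ_imp_Suc)
  qed
  show "(\<lambda>n. prob {w\<in>space M. (\<forall>k\<in>{1..n}. walk X k w \<in> B) \<and> walk X (Suc n) w = h}) sums cv w h"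
  proof -
    have ebn: "bnd (e N)" for N unfolding bnd_def
    proof (intro exI[of _ K] allI)
      fix y
      have "K * c N y \<le> K" using K0 c_le1[of N y] by (simp add: mult_left_le)
      then show "\<bar>e N y\<bar> \<le> K" using spec[OF eb[of N], of y] by auto
    qed
    have "(\<Sum>n<Suc N. prob {w\<in>space M. (\<forall>k\<in>{1..n}. walk X k w \<in> B) \<and> walk X (Suc n) w = h})
       = cv w h - cv (e N) h" for N
    proof -
      have "(\<Sum>n<Suc N. prob {w\<in>space M. (\<forall>k\<in>{1..n}. walk X k w \<in> B) \<and> walk X (Suc n) w = h})
         = cv (S N) h" unfolding cvS by (rule sum.cong[OF refl]) (rule step)
      also have "S N = (\<lambda>z. w z - e N z)" by (simp add: e_def fun_eq_iff)
      also have "cv (\<lambda>z. w z - e N z) h = cv w h - cv (e N) h" by (rule cv_diff[OF wb ebn])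
      finally show ?thesis .
    qed
    moreover have "(\<lambda>N. cv w h - cv (e N) h) \<longlonglongrightarrow> cv w h - 0"
    proof (intro tendsto_intros)
      show "(\<lambda>N. cv (e N) h) \<longlonglongrightarrow> 0"
      proof (rule tendsto_sandwich[of "\<lambda>_. 0" _ _ "\<lambda>N. K * c (Suc N) h"])
        have "0 \<le> cv (e N) h" for N by (rule cv_nonneg) (use eb in blast)
        then show "\<forall>\<^sub>F N in sequentially. 0 \<le> cv (e N) h" by simp
        have kcb: "bnd (\<lambda>z. K * c N z)" for N
          unfolding bnd_def using K0 c_nonneg c_le1
          by (intro exI[of _ K] allI) (simp add: abs_mult mult_left_le)
        have "cv (e N) h \<le> K * c (Suc N) h" for N
        proof -
          have "cv (e N) h \<le> cv (\<lambda>z. K * c N z) h"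
            by (rule cv_mono[OF ebn kcb]) (use eb in auto)
          then show ?thesis by (simp add: cv_cmult c_Suc)
        qed
        then show "\<forall>\<^sub>F N in sequentially. cv (e N) h \<le> K * c (Suc N) h" by auto
        show "(\<lambda>N. K * c (Suc N) h) \<longlonglongrightarrow> 0"
          using tendsto_mult_right_zero[OF cto[THEN LIMSEQ_Suc]] .
      qed simp
    qed
    ultimately have "(\<lambda>N. \<Sum>n<Suc N. prob {w\<in>space M. (\<forall>k\<in>{1..n}. walk X k w \<in> B) \<and> walk X (Suc n) w = h}) \<longlonglongrightarrow> cv w h"
      by simp
    then show ?thesis unfolding sums_def by (rule LIMSEQ_imp_Suc)
  qed
qed

lemma int_ident: "(\<integral>w. f (X i w) \<partial>M) = (\<integral>w. f (X 0 w) \<partial>M)" for f :: "int \<Rightarrow> real"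
proof -
  have "(\<integral>w. f (X i w) \<partial>M) = (\<integral>x. f x \<partial>distr M (count_space UNIV) (X i))"
    by (rule integral_distr[OF X_meas, symmetric]) simp
  also have "\<dots> = (\<integral>x. f x \<partial>distr M (count_space UNIV) (X 0))"
    unfolding ident[of i] ..
  also have "\<dots> = (\<integral>w. f (X 0 w) \<partial>M)"
    by (rule integral_distr[OF X_meas]) simp
  finally show ?thesis .
qed

lemma integrable_ident:
  fixes f :: "int \<Rightarrow> real"
  assumes "integrable M (\<lambda>w. f (X 0 w))" shows "integrable M (\<lambda>w. f (X i w))"
proof -
  have "integrable (distr M (count_space UNIV) (X 0)) f"
    using assms by (subst integrable_distr_eq[OF X_meas]) simp_all
  then have "integrable (distr M (count_space UNIV) (X i)) f" unfolding ident[of i] .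
  then show ?thesis by (subst (asm) integrable_distr_eq[OF X_meas]) simp_all
qed

lemma R_meas[measurable]: "(\<lambda>w. f (X i w)) \<in> borel_measurable M" for f :: "int \<Rightarrow> real"
  by (rule measurable_compose[OF X_meas]) simp

lemma tail_to_0:
  fixes g :: "int \<Rightarrow> real"
  assumes int: "integrable M (\<lambda>w. real_of_int (X 0 w))"
    and h: "\<And>x. \<forall>\<^sub>F K in sequentially. h K x = 0"
    and hb: "\<And>K x. \<bar>h K x\<bar> \<le> \<bar>real_of_int x\<bar>"
  shows "(\<lambda>K. \<integral>w. h K (X 0 w) \<partial>M) \<longlonglongrightarrow> 0"
proof -
  have "(\<lambda>K. \<integral>w. h K (X 0 w) \<partial>M) \<longlonglongrightarrow> (\<integral>w. 0 \<partial>M)"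
  proof (rule integral_dominated_convergence[where w="\<lambda>w. \<bar>real_of_int (X 0 w)\<bar>"])
    show "integrable M (\<lambda>w. \<bar>real_of_int (X 0 w)\<bar>)" using int by (rule integrable_abs)
    show "AE x in M. (\<lambda>K. h K (X 0 x)) \<longlonglongrightarrow> 0"
      by (intro AE_I2 tendsto_eventually h)
    show "AE x in M. norm (h K (X 0 x)) \<le> \<bar>real_of_int (X 0 x)\<bar>" for K
      using hb by simp
  qed simp_all
  then show ?thesis by simp
qed

lemma distr_ident: "distr M borel (\<lambda>w. f (X i w)) = distr M borel (\<lambda>w. f (X 0 w))" for f :: "int \<Rightarrow> real"
proof -
  have "distr M borel (\<lambda>w. f (X i w)) = distr (distr M (count_space UNIV) (X i)) borel f" for i
    by (subst distr_distr[OF _ X_meas]) (simp_all add: comp_def)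
  from this[of i] this[of 0] show ?thesis unfolding ident[of i] by simp
qed

lemma hoeff_part:
  fixes f :: "int \<Rightarrow> real"
  assumes fab: "\<And>x. f x \<in> {a..b}" and ab: "a < b" and N: "0 < N" and t: "0 \<le> t"
  shows "prob {w\<in>space M. (\<integral>w. f (X 0 w) \<partial>M) + t \<le> (\<Sum>i<N. f (X i w)) / real N} \<le> exp (-2 * real N * t\<^sup>2 / (b - a)\<^sup>2)"
proof -
  define W where "W i w = f (X i w)" for i w
  have ind: "indep_vars (\<lambda>_. borel) W {..<N}"
  proof -
    have "indep_vars (\<lambda>_. borel) (\<lambda>i w. f (X i w)) UNIV"
      by (rule indep_vars_compose2[OF indep]) simp
    then show ?thesis unfolding W_def by (rule indep_vars_subset) simp
  qed
  interpret H: Hoeffding_ineq_iid M "{..<N}" W "W 0" a b "expectation (W 0)"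
  proof unfold_locales
    show "distr M borel (W i) = distr M borel (W 0)" for i
      unfolding W_def by (rule distr_ident)
    show "AE x in M. W 0 x \<in> {a..b}" using fab by (simp add: W_def)
    show "finite {..<N}" by simp
    show "indep_vars (\<lambda>_. borel) W {..<N}" by (rule ind)
    show "random_variable borel (W 0)" unfolding W_def by (rule R_meas)
  qed
  have "prob {w\<in>space M. (\<Sum>i\<in>{..<N}. W i w) / real (card {..<N}) \<ge> expectation (W 0) + t} \<le>
      exp (-2 * real (card {..<N}) * t\<^sup>2 / (b - a)\<^sup>2)"
    by (rule H.Hoeffding_ineq_ge'[OF t ab]) (use N in auto)
  moreover have "W 0 = (\<lambda>w. f (X 0 w))" by (simp add: W_def fun_eq_iff)
  ultimately show ?thesis by (simp add: W_def)
qed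

lemma c_to_0:
  assumes int: "integrable M (\<lambda>w. real_of_int (X 0 w))"
    and neg: "(\<integral>w. real_of_int (X 0 w) \<partial>M) < 0"
  shows "(\<lambda>N. c N y) \<longlonglongrightarrow> 0"
proof -
  define \<mu> where "\<mu> = (\<integral>w. real_of_int (X 0 w) \<partial>M)"
  have mu: "\<mu> < 0" using neg by (simp add: \<mu>_def)
  have tK: "(\<lambda>K::nat. \<integral>w. max (real_of_int (X 0 w) - real K) 0 \<partial>M) \<longlonglongrightarrow> 0"
  proof (rule tail_to_0[OF int, where h="\<lambda>K x. max (real_of_int x - real K) 0"])
    fix x :: int
    show "\<forall>\<^sub>F K in sequentially. max (real_of_int x - real K) 0 = 0"
      unfolding eventually_sequentially by (rule exI[of _ "nat x"]) auto
  qed auto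
  have tL: "(\<lambda>L::nat. \<integral>w. max (- real L - real_of_int (X 0 w)) 0 \<partial>M) \<longlonglongrightarrow> 0"
  proof (rule tail_to_0[OF int, where h="\<lambda>L x. max (- real L - real_of_int x) 0"])
    fix x :: int
    show "\<forall>\<^sub>F L in sequentially. max (- real L - real_of_int x) 0 = 0"
      unfolding eventually_sequentially by (rule exI[of _ "nat (- x)"]) auto
  qed auto
  obtain L :: nat where L: "(\<integral>w. max (- real L - real_of_int (X 0 w)) 0 \<partial>M) < - \<mu> / 2"
    using order_tendstoD(2)[OF tL, of "- \<mu> / 2"] mu by (auto simp: eventually_sequentially)
  show ?thesis
  proof (rule LIMSEQ_I)
    fix \<epsilon> :: real assume \<epsilon>: "0 < \<epsilon>"
    obtain K :: nat where K1: "1 \<le> K" and K: "(\<integral>w. max (real_of_int (X 0 w) - real K) 0 \<partial>M) < \<epsilon> * (- \<mu>) / 8"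
    proof -
      obtain N0 where "\<forall>n\<ge>N0. (\<integral>w. max (real_of_int (X 0 w) - real n) 0 \<partial>M) < \<epsilon> * (- \<mu>) / 8"
        using order_tendstoD(2)[OF tK, of "\<epsilon> * (- \<mu>) / 8"] mu \<epsilon> mult_pos_neg[OF \<epsilon> mu]
        by (auto simp: eventually_sequentially)
      then have "(\<integral>w. max (real_of_int (X 0 w) - real (N0 + 1)) 0 \<partial>M) < \<epsilon> * (- \<mu>) / 8"
        using le_add1 by blast
      then show ?thesis using that[of "N0 + 1"] by linarith
    qed
    define W where "W i w = max (min (real_of_int (X i w)) (real K)) (- real L)" for i w
    define V where "V i w = max (real_of_int (X i w) - real K) 0" for i w
    define EW where "EW = (\<integral>w. W 0 w \<partial>M)"
    define EV where "EV = (\<integral>w. V 0 w \<partial>M)"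
    have Vint: "integrable M (V i)" for i
    proof -
      have "integrable M (\<lambda>w. V 0 w)" unfolding V_def
        by (rule Bochner_Integration.integrable_bound[OF int]) auto
      then show ?thesis unfolding V_def
        by (rule integrable_ident[where f="\<lambda>x. max (real_of_int x - real K) 0"])
    qed
    have EVi: "(\<integral>w. V i w \<partial>M) = EV" for i
      unfolding V_def EV_def by (rule int_ident[where f="\<lambda>x. max (real_of_int x - real K) 0"])
    have EV_lt: "EV < \<epsilon> * (- \<mu>) / 8" using K by (simp add: EV_def V_def)
    have EW_le: "EW \<le> \<mu> / 2"
    proof -
      have i1: "integrable M (\<lambda>w. max (- real L - real_of_int (X 0 w)) 0)"
        by (rule Bochner_Integration.integrable_bound[OF int]) auto
      have "EW \<le> (\<integral>w. real_of_int (X 0 w) + max (- real L - real_of_int (X 0 w)) 0 \<partial>M)"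
        unfolding EW_def
      proof (rule integral_mono)
        show "integrable M (W 0)" unfolding W_def
          by (rule integrable_const_bound[where B="real K + real L"]) auto
      qed (use int i1 in \<open>auto simp: W_def\<close>)
      also have "\<dots> = \<mu> + (\<integral>w. max (- real L - real_of_int (X 0 w)) 0 \<partial>M)"
        unfolding \<mu>_def using int i1 by (rule Bochner_Integration.integral_add)
      finally show ?thesis using L by simp
    qed
    define t where "t = - \<mu> / 8"
    have t0: "0 \<le> t" using mu by (simp add: t_def)
    define \<rho> where "\<rho> = exp (-2 * t\<^sup>2 / (real K + real L)\<^sup>2)"
    have \<rho>0: "0 \<le> \<rho>" by (simp add: \<rho>_def)
    have \<rho>1: "\<rho> < 1" using mu K1 by (simp add: \<rho>_def t_def)
    obtain N2 where N2: "\<forall>N\<ge>N2. \<rho> ^ N < \<epsilon> / 2"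
      using order_tendstoD(2)[OF LIMSEQ_power_zero[of \<rho>], of "\<epsilon> / 2"] \<rho>0 \<rho>1 \<epsilon>
      by (auto simp: eventually_sequentially)
    define N1 where "N1 = nat \<lceil>8 * \<bar>real_of_int y\<bar> / (- \<mu>)\<rceil> + 1"
    show "\<exists>no. \<forall>n\<ge>no. norm (c n y - 0) < \<epsilon>"
    proof (intro exI[of _ "max N1 N2"] allI impI)
      fix N assume N: "max N1 N2 \<le> N"
      then have NN1: "N1 \<le> N" and NN2: "N2 \<le> N" by auto
      then have Npos: "0 < N" by (simp add: N1_def)
      have yN: "real N * \<mu> / 8 \<le> real_of_int y"
      proof -
        have "8 * \<bar>real_of_int y\<bar> / (- \<mu>) \<le> real N"
          using NN1 unfolding N1_def by linarith
        then have "8 * \<bar>real_of_int y\<bar> \<le> real N * (- \<mu>)"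
          using mu pos_divide_le_eq[of "- \<mu>" "8 * \<bar>real_of_int y\<bar>" "real N"] by simp
        then show ?thesis by linarith
      qed
      define EA where "EA = {w\<in>space M. EW + t \<le> (\<Sum>i<N. W i w) / real N}"
      define EB where "EB = {w\<in>space M. - real N * \<mu> / 4 \<le> (\<Sum>i<N. V i w)}"
      have EAm: "EA \<in> sets M" unfolding EA_def W_def by measurable
      have EBm: "EB \<in> sets M" unfolding EB_def V_def by measurable
      have sub: "{w\<in>space M. y \<le> walk X N w} \<subseteq> EA \<union> EB"
      proof safe
        fix w assume w: "w \<in> space M" "y \<le> walk X N w" "w \<notin> EB"
        have sV: "(\<Sum>i<N. V i w) < - real N * \<mu> / 4" using w by (auto simp: EB_def)
        have "real_of_int y \<le> real_of_int (walk X N w)" using w(2) by simp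
        also have "\<dots> = (\<Sum>i<N. real_of_int (X i w))" by (simp add: walk_def)
        also have "\<dots> \<le> (\<Sum>i<N. W i w + V i w)"
          by (intro sum_mono) (auto simp: W_def V_def)
        also have "\<dots> = (\<Sum>i<N. W i w) + (\<Sum>i<N. V i w)" by (simp add: sum.distrib)
        finally have "real_of_int y - (\<Sum>i<N. V i w) \<le> (\<Sum>i<N. W i w)" by simp
        then have "real N * (EW + t) \<le> (\<Sum>i<N. W i w)"
          by (rule arith_helper[OF yN sV EW_le mu Npos t_def])
        then have "EW + t \<le> (\<Sum>i<N. W i w) / real N"
          using Npos by (simp add: le_divide_eq mult.commute)
        then show "w \<in> EA" using w by (simp add: EA_def)
      qed
      have PA: "prob EA \<le> \<rho> ^ N"
      proof -
        have "prob EA \<le> exp (-2 * real N * t\<^sup>2 / (real K - (- real L))\<^sup>2)"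
          unfolding EA_def W_def EW_def
          by (rule hoeff_part[where f="\<lambda>x. max (min (real_of_int x) (real K)) (- real L)"])
             (use K1 Npos t0 in auto)
        also have "\<dots> = exp (real N * (-2 * t\<^sup>2 / (real K + real L)\<^sup>2))"
          by (simp add: field_simps)
        also have "\<dots> = \<rho> ^ N" unfolding \<rho>_def by (rule exp_of_nat_mult)
        finally show ?thesis .
      qed
      have PB: "prob EB \<le> 4 * EV / (- \<mu>)"
      proof -
        have VS: "integrable M (\<lambda>w. \<Sum>i<N. V i w)"
          by (rule Bochner_Integration.integrable_sum) (rule Vint)
        have "prob EB \<le> (\<integral>w. (\<Sum>i<N. V i w) \<partial>M) / (- real N * \<mu> / 4)"
          unfolding EB_def
          by (rule integral_Markov_inequality_measure[OF VS, where A="space M"])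
             (use mu Npos in \<open>auto simp: V_def mult_pos_neg intro!: sum_nonneg\<close>)
        also have "(\<integral>w. (\<Sum>i<N. V i w) \<partial>M) = real N * EV"
          by (subst Bochner_Integration.integral_sum) (auto simp: Vint EVi)
        also have "real N * EV / (- real N * \<mu> / 4) = 4 * EV / (- \<mu>)"
          using Npos by (simp add: field_simps)
        finally show ?thesis .
      qed
      have "c N y \<le> prob (EA \<union> EB)"
        unfolding c_def by (rule finite_measure_mono[OF sub]) (use EAm EBm in auto)
      also have "\<dots> \<le> prob EA + prob EB" by (rule measure_Un_le[OF EAm EBm])
      also have "\<dots> < \<epsilon> / 2 + \<epsilon> / 2"
      proof (rule add_le_less_mono)
        show "prob EA \<le> \<epsilon> / 2" using PA N2 NN2 by fastforce
        have "4 * EV / (- \<mu>) < 4 * (\<epsilon> * (- \<mu>) / 8) / (- \<mu>)"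
          using EV_lt mu by (intro divide_strict_right_mono) auto
        also have "\<dots> = \<epsilon> / 2" using mu by (simp add: field_simps)
        finally show "prob EB < \<epsilon> / 2" using PB by linarith
      qed
      finally show "norm (c N y - 0) < \<epsilon>" using c_nonneg[of N y] by simp
    qed
  qed
qed


lemma cv_two:
  "cv (\<lambda>z. if z = 0 then \<alpha> else if z < 0 then \<beta> else 0) y =
     \<alpha> * prob {w\<in>space M. X 0 w = y} + \<beta> * prob {w\<in>space M. y < X 0 w}"
proof -
  define A1 where "A1 = {w\<in>space M. X 0 w = y}"
  define A2 where "A2 = {w\<in>space M. y < X 0 w}"
  have m1: "A1 \<in> sets M" unfolding A1_def by measurable
  have m2: "A2 \<in> sets M" unfolding A2_def by measurable
  have "cv (\<lambda>z. if z = 0 then \<alpha> else if z < 0 then \<beta> else 0) y =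
      (\<integral>w. \<alpha> * indicator A1 w + \<beta> * indicator A2 w \<partial>M)"
    unfolding cv_def by (rule Bochner_Integration.integral_cong) (auto simp: A1_def A2_def indicator_def)
  also have "\<dots> = (\<integral>w. \<alpha> * indicator A1 w \<partial>M) + (\<integral>w. \<beta> * indicator A2 w \<partial>M)"
    by (rule Bochner_Integration.integral_add) (auto intro!: integrable_real_indicator m1 m2 simp: less_top[symmetric])
  also have "\<dots> = \<alpha> * prob A1 + \<beta> * prob A2"
    using m1 m2 by (simp add: sets.Int_space_eq2)
  finally show ?thesis by (simp add: A1_def A2_def)
qed

end

lemma Max_walk:
  "Max ((\<lambda>k. walk X k w) ` {..<Suc n}) = 0 \<longleftrightarrow> (\<forall>k\<in>{1..n}. walk X k w \<le> 0)"
proof -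
  have fin: "finite ((\<lambda>k. walk X k w) ` {..<Suc n})" and ne: "(\<lambda>k. walk X k w) ` {..<Suc n} \<noteq> {}" by auto
  have z: "(0::int) \<in> (\<lambda>k. walk X k w) ` {..<Suc n}"
    by (rule image_eqI[of _ _ 0]) (simp_all add: walk_def)
  show ?thesis
    unfolding Max_eq_iff[OF fin ne] using z
    apply (auto simp: less_Suc_eq_le)
    subgoal for k a by (cases a) (simp add: walk_def, force)
    done
qed

locale geo = rw M X for M :: "'a measure" and X +
  fixes F :: "int \<Rightarrow> real" and \<xi> r :: real
  assumes F_def: "\<And>x. F x = measure M {w \<in> space M. X 0 w \<le> x}"
    and integ: "integrable M (\<lambda>w. real_of_int (X 0 w))"
    and neg_mean: "(\<integral>w. real_of_int (X 0 w) \<partial>M) < 0"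
    and \<xi>: "0 < \<xi>" "\<xi> < 1" and r: "0 < r" "r < 1"
    and left_tail: "\<And>x::int. x \<le> 0 \<Longrightarrow> F x = \<xi> * r ^ nat (- x)"
begin

lemma pX: "prob {w\<in>space M. X 0 w = x} = F x - F (x - 1)"
proof -
  have "{w\<in>space M. X 0 w = x} = {w\<in>space M. X 0 w \<le> x} - {w\<in>space M. X 0 w \<le> x - 1}" by auto
  moreover have "prob ({w\<in>space M. X 0 w \<le> x} - {w\<in>space M. X 0 w \<le> x - 1}) =
      prob {w\<in>space M. X 0 w \<le> x} - prob {w\<in>space M. X 0 w \<le> x - 1}"
    by (rule finite_measure_Diff) (measurable, auto)
  ultimately show ?thesis unfolding F_def by simp
qed

lemma pgt: "prob {w\<in>space M. x < X 0 w} = 1 - F x"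
proof -
  have "{w\<in>space M. x < X 0 w} = space M - {w\<in>space M. X 0 w \<le> x}" by auto
  then show ?thesis unfolding F_def by (simp add: prob_compl)
qed

lemma pX_neg: "x \<le> 0 \<Longrightarrow> prob {w\<in>space M. X 0 w = x} = \<xi> * (1 - r) * r ^ nat (- x)"
proof -
  assume x: "x \<le> 0"
  have "nat (- (x - 1)) = Suc (nat (- x))" using x by simp
  then show ?thesis using x by (simp add: pX left_tail algebra_simps)
qed

lemma cvw:
  assumes "y \<le> 0"
  shows "cv (\<lambda>z. if z = 0 then \<alpha> else if z < 0 then (1 - r) * \<alpha> else 0) y = (if y = 0 then \<xi> * (1 - r) * \<alpha> + (1 - r) * \<alpha> * (1 - \<xi>) else (1 - r) * \<alpha>)"
  using assms by (simp add: cv_two pX_neg pgt left_tail algebra_simps)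


lemma walk_ev:
  assumes "\<And>f g. (\<forall>k\<le>n. f k = g k) \<Longrightarrow> P f = P g"
  shows "{w\<in>space M. P (\<lambda>k. walk X k w)} \<in> sets M"
proof -
  have "loc n (\<lambda>f. P (ws f))"
    unfolding loc_def
  proof (intro allI impI)
    fix f g :: "nat \<Rightarrow> int" assume "\<forall>i<n. f i = g i"
    then have "\<forall>k\<le>n. ws f k = ws g k" using ws_loc by blast
    then show "P (ws f) = P (ws g)" using assms[of "ws f" "ws g"] by blast
  qed
  from ev_meas[OF this] show ?thesis by (simp add: walk_ws[abs_def])
qed

lemma cto: "(\<lambda>N. c N y) \<longlonglongrightarrow> 0"
  by (rule c_to_0[OF integ neg_mean])

abbreviation "wu \<equiv> (\<lambda>z. if z = 0 then 1 else if z < 0 then (1 - r) * 1 else 0) :: int \<Rightarrow> real"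

abbreviation "wv \<equiv> (\<lambda>z. if z = 0 then 1 / r else if z < 0 then (1 - r) * (1 / r) else 0) :: int \<Rightarrow> real"

lemma zeta: "ladder_zeta M X = 1 - r"
proof -
  have weq: "wu y = (if y = 0 then 1 else 0) + (if y \<in> {..-1} then cv wu y else 0)" for y
    using cvw[of y 1] by (auto simp: algebra_simps)
  have "(\<lambda>n. prob {w\<in>space M. (\<forall>k\<in>{1..n}. walk X k w \<in> {..-1}) \<and> walk X (Suc n) w = 0}) sums cv wu 0"
    by (rule generic(2)[where K=1, OF _ _ _ weq cto]) (use r in auto)
  moreover have "cv wu 0 = 1 - r"
    using cvw[of 0 1] by (simp add: algebra_simps)
  moreover have "{w\<in>space M. (\<forall>k\<in>{1..n}. walk X k w \<in> {..-1}) \<and> walk X (Suc n) w = 0} =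
     {w\<in>space M. (\<forall>k\<in>{1..<Suc n}. walk X k w < 0) \<and> walk X (Suc n) w = 0}" for n
    by (auto simp: atLeastLessThanSuc_atLeastAtMost)
  ultimately show ?thesis unfolding ladder_zeta_def by (simp add: sums_iff)
qed

lemma wv_sums: "(\<lambda>n. prob {w\<in>space M. (\<forall>k\<in>{1..n}. walk X k w \<in> {..0}) \<and> walk X (Suc n) w = h}) sums cv wv h"
proof -
  have weq: "wv y = (if y = 0 then 1 else 0) + (if y \<in> {..0} then cv wv y else 0)" for y
    using cvw[of y "1/r"] r by (auto simp: field_simps)
  show ?thesis
    by (rule generic(2)[where K="1/r", OF _ _ _ weq cto]) (use r in \<open>auto simp: field_simps\<close>)
qed

lemma cv_wv_pos: "0 < h \<Longrightarrow> cv wv h = (1 / r) * (F h - F (h - 1)) + ((1 - r) / r) * (1 - F h)"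
  by (simp add: cv_two pX pgt)

lemma L_fin:
  shows "ladder_L M X {0<..x} = (\<Sum>h\<in>{1..x}. cv wv h)"
proof -
  define E where "E n h = {w\<in>space M. (\<forall>k\<in>{1..n}. walk X k w \<in> {..0}) \<and> walk X (Suc n) w = h}" for n h
  have Em: "E n h \<in> sets M" for n h
    unfolding E_def by (rule walk_ev[where n="Suc n"]) auto
  have "{w \<in> space M. Max ((\<lambda>k. walk X k w) ` {..<Suc n}) = 0 \<and> 0 < walk X (Suc n) w \<and> walk X (Suc n) w \<in> {0<..x}}
      = (\<Union>h\<in>{1..x}. E n h)" for n
    unfolding E_def Max_walk by auto
  moreover have "prob (\<Union>h\<in>{1..x}. E n h) = (\<Sum>h\<in>{1..x}. prob (E n h))" for n
  proof (rule finite_measure_finite_Union)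
    show "disjoint_family_on (E n) {1..x}" unfolding disjoint_family_on_def E_def by auto
  qed (use Em in auto)
  ultimately have "measure M {w \<in> space M. Max ((\<lambda>k. walk X k w) ` {..<Suc n}) = 0 \<and> 0 < walk X (Suc n) w \<and> walk X (Suc n) w \<in> {0<..x}}
      = (\<Sum>h\<in>{1..x}. prob (E n h))" for n by simp
  moreover have "(\<lambda>n. \<Sum>h\<in>{1..x}. prob (E n h)) sums (\<Sum>h\<in>{1..x}. cv wv h)"
    unfolding E_def by (rule sums_sum) (rule wv_sums)
  ultimately show ?thesis unfolding ladder_L_def by (simp add: sums_iff)
qed


lemma L_formula:
  assumes x: "0 \<le> x"
  shows "r * ladder_L M X {0<..x} = F x - F 0 + (1 - r) * (\<Sum>m=1..x. 1 - F m)"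
proof -
  have tel: "(\<Sum>h=1..x. F h - F (h - 1)) = F x - F 0" if "0 \<le> x" for x
    using that
  proof (induction x rule: int_ge_induct)
    case base then show ?case by simp
  next
    case (step x)
    have "{1..x+1} = insert (x+1) {1..x}" using step by auto
    then show ?case using step by simp
  qed
  have "r * ladder_L M X {0<..x} = (\<Sum>h=1..x. r * cv wv h)"
    by (simp add: L_fin sum_distrib_left)
  also have "\<dots> = (\<Sum>h=1..x. (F h - F (h - 1)) + (1 - r) * (1 - F h))"
    by (rule sum.cong) (use r in \<open>auto simp: cv_wv_pos field_simps\<close>)
  also have "\<dots> = F x - F 0 + (1 - r) * (\<Sum>m=1..x. 1 - F m)"
    using tel[of x] x by (simp add: sum.distrib sum_distrib_left)
  finally show ?thesis .
qed

lemma nat_rv_sums: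
  fixes f :: "'a \<Rightarrow> nat"
  assumes fm: "f \<in> measurable M (count_space UNIV)" and fi: "integrable M (\<lambda>w. real (f w))"
  shows "(\<lambda>t. prob {w\<in>space M. t < f w}) sums (\<integral>w. real (f w) \<partial>M)"
proof -
  have eq: "(\<integral>\<^sup>+w. ennreal (real (f w)) \<partial>M) = (\<Sum>t. ennreal (prob {w\<in>space M. t < f w}))"
    using nn_integral_nat_function[OF fm] by (simp add: ennreal_of_nat_eq_real_of_nat emeasure_eq_measure)
  have "(\<integral>\<^sup>+w. ennreal (real (f w)) \<partial>M) \<noteq> \<infinity>" using integrableD(2)[OF fi] by simp
  then have fin: "(\<Sum>t. ennreal (prob {w\<in>space M. t < f w})) \<noteq> \<top>" using eq by simp
  have sm: "summable (\<lambda>t. prob {w\<in>space M. t < f w})"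
    by (rule summable_suminf_not_top[OF _ fin]) simp
  have "(\<integral>w. real (f w) \<partial>M) = enn2real (\<integral>\<^sup>+w. ennreal (real (f w)) \<partial>M)"
    by (rule integral_eq_nn_integral) (use fi in auto)
  also have "\<dots> = (\<Sum>t. prob {w\<in>space M. t < f w})"
    unfolding eq using suminf_nonneg[OF sm] by (subst suminf_ennreal2[OF _ sm]) auto
  finally show ?thesis using sm by (simp add: sums_iff)
qed

lemma EX_formula:
  "summable (\<lambda>t. 1 - F (int t))"
  "(\<integral>w. real_of_int (X 0 w) \<partial>M) = (\<Sum>t. 1 - F (int t)) - \<xi> * r / (1 - r)"
proof -
  have m1: "(\<lambda>w. nat (X 0 w)) \<in> measurable M (count_space UNIV)"
    by (rule measurable_compose[OF X_meas]) simp
  have m2: "(\<lambda>w. nat (- X 0 w)) \<in> measurable M (count_space UNIV)"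
    by (rule measurable_compose[OF X_meas]) simp
  have i1: "integrable M (\<lambda>w. real (nat (X 0 w)))"
    by (rule Bochner_Integration.integrable_bound[OF integ]) (auto intro: measurable_compose[OF m1])
  have i2: "integrable M (\<lambda>w. real (nat (- X 0 w)))"
    by (rule Bochner_Integration.integrable_bound[OF integ]) (auto intro: measurable_compose[OF m2])
  have s1: "(\<lambda>t. 1 - F (int t)) sums (\<integral>w. real (nat (X 0 w)) \<partial>M)"
  proof -
    have "prob {w\<in>space M. t < nat (X 0 w)} = 1 - F (int t)" for t
      using pgt[of "int t"] by (simp add: zless_nat_eq_int_zless)
    then show ?thesis using nat_rv_sums[OF m1 i1] by simp
  qed
  have s2: "(\<lambda>t. \<xi> * r * r ^ t) sums (\<integral>w. real (nat (- X 0 w)) \<partial>M)"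
  proof -
    have "prob {w\<in>space M. t < nat (- X 0 w)} = \<xi> * r * r ^ t" for t
    proof -
      have "{w\<in>space M. t < nat (- X 0 w)} = {w\<in>space M. X 0 w \<le> - int t - 1}" by auto
      moreover have "nat (- (- int t - 1)) = Suc t" by simp
      ultimately show ?thesis using left_tail[of "- int t - 1"] by (simp add: F_def)
    qed
    then show ?thesis using nat_rv_sums[OF m2 i2] by simp
  qed
  have s3: "(\<lambda>t. \<xi> * r * r ^ t) sums (\<xi> * r / (1 - r))"
    using sums_mult[OF geometric_sums[of r], of "\<xi> * r"] r by simp
  show "summable (\<lambda>t. 1 - F (int t))" using s1 by (simp add: sums_iff)
  have "(\<integral>w. real_of_int (X 0 w) \<partial>M) = (\<integral>w. real (nat (X 0 w)) - real (nat (- X 0 w)) \<partial>M)"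
    by (rule Bochner_Integration.integral_cong) auto
  also have "\<dots> = (\<integral>w. real (nat (X 0 w)) \<partial>M) - (\<integral>w. real (nat (- X 0 w)) \<partial>M)"
    by (rule Bochner_Integration.integral_diff[OF i1 i2])
  finally show "(\<integral>w. real_of_int (X 0 w) \<partial>M) = (\<Sum>t. 1 - F (int t)) - \<xi> * r / (1 - r)"
    using s1 s2 s3 by (simp add: sums_iff)
qed


lemma p_lim: "(\<lambda>m::nat. ladder_L M X {0<..int m}) \<longlonglongrightarrow> prob {w\<in>space M. \<exists>n. walk X n w > 0}"
proof -
  define D where "D m n = {w\<in>space M. (\<forall>k\<in>{1..n}. walk X k w \<le> 0) \<and> 0 < walk X (Suc n) w \<and> walk X (Suc n) w \<le> int m}" for m n
  define G where "G m = (\<Union>n. D m n)" for m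
  have Dm: "D m n \<in> sets M" for m n
    unfolding D_def by (rule walk_ev[where n="Suc n"]) auto
  have disj: "disjoint_family (D m)" for m
    unfolding disjoint_family_on_def
  proof (intro ballI impI)
    fix n n' :: nat assume "n \<noteq> n'"
    have key: "D m a \<inter> D m b = {}" if ab: "a < b" for a b
    proof (rule equals0I)
      fix w assume "w \<in> D m a \<inter> D m b"
      then have "walk X (Suc a) w > 0" "\<forall>k\<in>{1..b}. walk X k w \<le> 0" unfolding D_def by auto
      moreover have "Suc a \<in> {1..b}" using ab by simp
      ultimately show False by fastforce
    qed
    show "D m n \<inter> D m n' = {}"
    proof (cases "n < n'")
      case True
      then show ?thesis by (rule key)
    next
      case False
      then have "n' < n" using \<open>n \<noteq> n'\<close> by simp
      then show ?thesis using key by blast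
    qed
  qed
  have LG: "ladder_L M X {0<..int m} = prob (G m)" for m
  proof -
    have "(\<lambda>n. prob (D m n)) sums prob (G m)"
      unfolding G_def by (rule finite_measure_UNION) (use Dm disj in auto)
    moreover have "{w \<in> space M. Max ((\<lambda>k. walk X k w) ` {..<Suc n}) = 0 \<and> 0 < walk X (Suc n) w \<and> walk X (Suc n) w \<in> {0<..int m}} = D m n" for n
      unfolding D_def Max_walk by auto
    ultimately show ?thesis unfolding ladder_L_def by (simp add: sums_iff)
  qed
  have inc: "incseq G"
    unfolding incseq_def G_def D_def by force
  have UG: "(\<Union>m. G m) = {w\<in>space M. \<exists>n. walk X n w > 0}"
  proof
    show "(\<Union>m. G m) \<subseteq> {w\<in>space M. \<exists>n. walk X n w > 0}" unfolding G_def D_def by auto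
  next
    show "{w\<in>space M. \<exists>n. walk X n w > 0} \<subseteq> (\<Union>m. G m)"
    proof (intro subsetI)
    fix w assume "w \<in> {w\<in>space M. \<exists>n. walk X n w > 0}"
    then obtain n where w: "w \<in> space M" "walk X n w > 0" by auto
    obtain n0 where n0: "walk X n0 w > 0" "\<And>k. k < n0 \<Longrightarrow> \<not> walk X k w > 0"
      using w(2) exists_least_iff[of "\<lambda>n. walk X n w > 0"] by blast
    have "n0 \<noteq> 0"
    proof
      assume "n0 = 0" then show False using n0(1) by (simp add: walk_def)
    qed
    then obtain n' where n': "n0 = Suc n'" by (cases n0) auto
    have "w \<in> D (nat (walk X n0 w)) n'"
      unfolding D_def using w(1) n0 n' by (auto simp: not_less)
    then show "w \<in> (\<Union>m. G m)" unfolding G_def by blast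
    qed
  qed
  have "(\<lambda>m. prob (G m)) \<longlonglongrightarrow> prob (\<Union>m. G m)"
  proof (rule finite_Lim_measure_incseq)
    show "range G \<subseteq> sets M" using Dm by (auto simp: G_def)
  qed (rule inc)
  then show ?thesis unfolding UG LG .
qed

lemma F_lim: "(\<lambda>m::nat. F (int m)) \<longlonglongrightarrow> 1"
proof -
  define A where "A m = {w\<in>space M. X 0 w \<le> int m}" for m :: nat
  have "(\<lambda>m. prob (A m)) \<longlonglongrightarrow> prob (\<Union>m. A m)"
    by (rule finite_Lim_measure_incseq) (auto simp: A_def incseq_def)
  moreover have "(\<Union>m. A m) = space M"
  proof safe
    fix w assume "w \<in> space M"
    then have "w \<in> A (nat (X 0 w))" by (simp add: A_def)
    then show "w \<in> (\<Union>m. A m)" by blast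
  qed (auto simp: A_def)
  ultimately show ?thesis by (simp add: A_def F_def prob_space)
qed

lemma p_formula:
  "r * prob {w\<in>space M. \<exists>n. walk X n w > 0} = r + (1 - r) * (\<integral>w. real_of_int (X 0 w) \<partial>M)"
proof -
  define T where "T t = 1 - F (int t)" for t
  have sT: "summable T" using EX_formula(1) by (simp add: T_def[abs_def])
  have sT': "summable (\<lambda>t. T (Suc t))" using sT by (simp add: summable_Suc_iff)
  have sumeq: "(\<Sum>m=1..int k. 1 - F m) = (\<Sum>t<k. T (Suc t))" for k
  proof (induction k)
    case 0 then show ?case by simp
  next
    case (Suc k)
    have "{1..int (Suc k)} = insert (int k + 1) {1..int k}" by auto
    then show ?case using Suc by (simp add: T_def add.commute)
  qed
  have lim1: "(\<lambda>m. r * ladder_L M X {0<..int m}) \<longlonglongrightarrow> r * prob {w\<in>space M. \<exists>n. walk X n w > 0}"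
    by (intro tendsto_intros p_lim)
  have "(\<lambda>m. F (int m) - F 0 + (1 - r) * (\<Sum>t<m. T (Suc t))) \<longlonglongrightarrow> 1 - F 0 + (1 - r) * (\<Sum>t. T (Suc t))"
    by (intro tendsto_intros F_lim summable_LIMSEQ sT')
  then have lim2: "(\<lambda>m. r * ladder_L M X {0<..int m}) \<longlonglongrightarrow> 1 - F 0 + (1 - r) * (\<Sum>t. T (Suc t))"
    by (simp add: L_formula sumeq)
  have "r * prob {w\<in>space M. \<exists>n. walk X n w > 0} = 1 - F 0 + (1 - r) * (\<Sum>t. T (Suc t))"
    using LIMSEQ_unique[OF lim1 lim2] .
  also have "\<dots> = r + (1 - r) * (\<integral>w. real_of_int (X 0 w) \<partial>M)"
  proof -
    have h1: "(\<Sum>t. T (Suc t)) = (\<Sum>t. T t) - (1 - \<xi>)"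
      using suminf_split_head[OF sT] left_tail[of 0] by (simp add: T_def[abs_def])
    have h2: "(\<integral>w. real_of_int (X 0 w) \<partial>M) = (\<Sum>t. T t) - \<xi> * r / (1 - r)"
      using EX_formula(2) by (simp add: T_def[abs_def])
    have F0: "F 0 = \<xi>" using left_tail[of 0] by simp
    show ?thesis unfolding h1 h2 F0 using r by (simp add: field_simps)
  qed
  finally show ?thesis .
qed

end

theorem mainTheorem3:
  fixes M :: "'a measure" and X :: "nat \<Rightarrow> 'a \<Rightarrow> int" and F :: "int \<Rightarrow> real"
    and \<xi> r :: real
  assumes "prob_space M"
    and indep: "prob_space.indep_vars M (\<lambda>_. count_space UNIV) X UNIV"
    and ident: "\<And>i. distr M (count_space UNIV) (X i) = distr M (count_space UNIV) (X 0)"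
    and F_def: "\<And>x. F x = measure M {w \<in> space M. X 0 w \<le> x}"
    and not_half_pos: "measure M {w \<in> space M. X 0 w > 0} > 0"
    and not_half_neg: "measure M {w \<in> space M. X 0 w < 0} > 0"
    and integrable: "integrable M (\<lambda>w. real_of_int (X 0 w))"
    and neg_mean: "(\<integral>w. real_of_int (X 0 w) \<partial>M) < 0"
    and \<xi>: "0 < \<xi>" "\<xi> < 1" and r: "0 < r" "r < 1"
    and left_tail: "\<And>x::int. x \<le> 0 \<Longrightarrow> F x = \<xi> * r ^ nat (- x)"
  shows "(1 - ladder_zeta M X) * measure M {w \<in> space M. \<exists>n. walk X n w > 0}
           = r + (1 - r) * (\<integral>w. real_of_int (X 0 w) \<partial>M)
       \<and> (\<forall>x::int. 1 \<le> x \<longrightarrow>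
           (1 - ladder_zeta M X) * ladder_L M X {0<..x}
           = F x - F 0 + (1 - r) * (\<Sum>m=1..x. 1 - F m))"
proof -
  interpret P: prob_space M by fact
  interpret G: geo M X F \<xi> r
  proof unfold_locales
    show "prob_space.indep_vars M (\<lambda>_. count_space UNIV) X UNIV" by (rule assms(2))
    show "distr M (count_space UNIV) (X i) = distr M (count_space UNIV) (X 0)" for i by (rule assms(3))
    show "F x = measure M {w \<in> space M. X 0 w \<le> x}" for x by (rule assms(4))
    show "x \<le> 0 \<Longrightarrow> F x = \<xi> * r ^ nat (- x)" for x by (rule left_tail)
  qed (use integrable neg_mean \<xi> r in auto)
  have z: "1 - ladder_zeta M X = r" using G.zeta by simp
  show ?thesis
    unfolding z using G.p_formula G.L_formula by auto
qed

end
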